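(* Let $P$ be a nilpotent linear operator on a finite-dimensional real or complex symplectic vector space $(V, B)$ which is self-adjoint with respect to $B$. Then every subspace $W \subset V$ invariant under the group $\mathrm{Aut}(V, B, P)$ has the form $W = \bigoplus_{i=1}^s (\operatorname{Ker} P^{k_i} \cap \operatorname{Im} P^{l_i})$ for some $s \in \mathbb{N}$ and integers $k_i, l_i \geq 0$.
   Context: $P$ self-adjoint with respect to $B$ means $B(Pu, v) = B(u, Pv)$ for all $u, v$. $\mathrm{Aut}(V, B, P)$ is the group of linear automorphisms of $V$ preserving $B$ and commuting with $P$ (equivalently, preserving both $B$ and $A(u,v) = B(Pu,v)$). *)

theory Defs
  imports "HOL-Analysis.Analysis"
begin

definition fin_dim_vs :: "('k::field \<Rightarrow> 'v::ab_group_add \<Rightarrow> 'v) \<Rightarrow> bool" where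
  "fin_dim_vs smult_v \<longleftrightarrow> vector_space smult_v \<and>
     (\<exists>S. finite S \<and> module.span smult_v S = UNIV)"

definition symplectic_form ::
  "('k::field \<Rightarrow> 'v::ab_group_add \<Rightarrow> 'v) \<Rightarrow> ('v \<Rightarrow> 'v \<Rightarrow> 'k) \<Rightarrow> bool" where
  "symplectic_form smult_v B \<longleftrightarrow>
     (\<forall>u v w. B (u + v) w = B u w + B v w) \<and>
     (\<forall>u v w. B u (v + w) = B u v + B u w) \<and>
     (\<forall>c u v. B (smult_v c u) v = c * B u v) \<and>
     (\<forall>c u v. B u (smult_v c v) = c * B u v) \<and>
     (\<forall>u. B u u = 0) \<and>
     (\<forall>u. (\<forall>v. B u v = 0) \<longrightarrow> u = 0)"

definition nilpotent_op :: "('v::zero \<Rightarrow> 'v) \<Rightarrow> bool" where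
  "nilpotent_op P \<longleftrightarrow> (\<exists>n. (P ^^ n) = (\<lambda>_. 0))"

definition self_adjoint_wrt :: "('v \<Rightarrow> 'v \<Rightarrow> 'k) \<Rightarrow> ('v \<Rightarrow> 'v) \<Rightarrow> bool" where
  "self_adjoint_wrt B P \<longleftrightarrow> (\<forall>u v. B (P u) v = B u (P v))"

definition Aut_VBP ::
  "('k::field \<Rightarrow> 'v::ab_group_add \<Rightarrow> 'v) \<Rightarrow> ('v \<Rightarrow> 'v \<Rightarrow> 'k) \<Rightarrow> ('v \<Rightarrow> 'v) \<Rightarrow> ('v \<Rightarrow> 'v) set" where
  "Aut_VBP smult_v B P = {g. Vector_Spaces.linear smult_v smult_v g \<and> bij g \<and>
      (\<forall>u v. B (g u) (g v) = B u v) \<and> g \<circ> P = P \<circ> g}"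

definition ker_pow :: "('v::zero \<Rightarrow> 'v) \<Rightarrow> nat \<Rightarrow> 'v set" where
  "ker_pow P k = {v. (P ^^ k) v = 0}"

definition im_pow :: "('v \<Rightarrow> 'v) \<Rightarrow> nat \<Rightarrow> 'v set" where
  "im_pow P l = range (P ^^ l)"

definition subspace_sum :: "nat \<Rightarrow> (nat \<Rightarrow> 'v::comm_monoid_add set) \<Rightarrow> 'v set" where
  "subspace_sum s U = {\<Sum>i<s. x i | x. \<forall>i<s. x i \<in> U i}"

definition theorem7_claim ::
  "('k::field \<Rightarrow> 'v::ab_group_add \<Rightarrow> 'v) \<Rightarrow> ('v \<Rightarrow> 'v \<Rightarrow> 'k) \<Rightarrow> ('v \<Rightarrow> 'v) \<Rightarrow> bool" where
  "theorem7_claim smult_v B P \<longleftrightarrow>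
     (\<forall>W. module.subspace smult_v W \<and> (\<forall>g \<in> Aut_VBP smult_v B P. g ` W \<subseteq> W) \<longrightarrow>
        (\<exists>s k l. W = subspace_sum s (\<lambda>i. ker_pow P (k i) \<inter> im_pow P (l i))))"

end

theory Submission
  imports Defs
begin


lemma sum_rev_atMost: "sum g {..(M::nat)} = sum (\<lambda>i. g (M - i)) {..M}"
  by (rule sum.reindex_bij_witness[where i="\<lambda>i. M-i" and j="\<lambda>i. M-i"]) auto

lemma mem_ssum: "x \<in> subspace_sum n U \<longleftrightarrow> (\<exists>f. x = (\<Sum>i<n. f i) \<and> (\<forall>i<n. f i \<in> U i))"
  unfolding subspace_sum_def by blast

locale symp = vector_space s for s :: "'k::field_char_0 \<Rightarrow> 'v::ab_group_add \<Rightarrow> 'v" +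
  fixes B :: "'v \<Rightarrow> 'v \<Rightarrow> 'k" and P :: "'v \<Rightarrow> 'v" and N :: nat
  assumes sf: "symplectic_form s B" and linP: "Vector_Spaces.linear s s P"
    and sa: "self_adjoint_wrt B P" and nil: "(P ^^ N) = (\<lambda>_. 0)"
begin

lemmas sfp = sf[unfolded symplectic_form_def]
lemma B_add1: "B (u + v) w = B u w + B v w"
  by (rule sfp[THEN conjunct1, rule_format])
lemma B_add2: "B u (v + w) = B u v + B u w"
  by (rule sfp[THEN conjunct2, THEN conjunct1, rule_format])
lemma B_sc1: "B (s c u) v = c * B u v"
  by (rule sfp[THEN conjunct2, THEN conjunct2, THEN conjunct1, rule_format])
lemma B_sc2: "B u (s c v) = c * B u v"
  by (rule sfp[THEN conjunct2, THEN conjunct2, THEN conjunct2, THEN conjunct1, rule_format])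
lemma B_alt: "B u u = 0"
  by (rule sfp[THEN conjunct2, THEN conjunct2, THEN conjunct2, THEN conjunct2, THEN conjunct1, rule_format])
lemma B_nd: assumes "\<And>v. B u v = 0" shows "u = 0"
  by (rule sfp[THEN conjunct2, THEN conjunct2, THEN conjunct2, THEN conjunct2, THEN conjunct2, rule_format])
     (rule assms)

lemma B_01[simp]: "B 0 v = 0" using B_add1[of 0 0 v] by simp
lemma B_02[simp]: "B u 0 = 0" using B_add2[of u 0 0] by simp
lemma B_neg1: "B (- u) v = - B u v" using B_add1[of u "-u" v] by (simp add: add_eq_0_iff)
lemma B_neg2: "B u (- v) = - B u v" using B_add2[of u v "-v"] by (simp add: add_eq_0_iff)
lemma B_diff1: "B (u - u') v = B u v - B u' v" using B_add1[of u "-u'" v] B_neg1 by simp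
lemma B_diff2: "B u (v - v') = B u v - B u v'" using B_add2[of u v "-v'"] B_neg2 by simp
lemma B_skew: "B u v = - B v u"
proof -
  have "B (u+v) (u+v) = (B u u + B v u) + (B u v + B v v)" by (simp only: B_add1 B_add2)
  then have "0 = B v u + B u v" by (simp add: B_alt)
  then have "B u v + B v u = 0" by (metis add.commute)
  then show ?thesis by (simp add: eq_neg_iff_add_eq_0)
qed
lemma B_sum1: "B (sum f A) v = (\<Sum>i\<in>A. B (f i) v)"
  by (induct A rule: infinite_finite_induct) (auto simp: B_add1)
lemma B_sum2: "B v (sum f A) = (\<Sum>i\<in>A. B v (f i))"
  by (induct A rule: infinite_finite_induct) (auto simp: B_add2)

lemma P_add: "P (x + y) = P x + P y" using linP unfolding Vector_Spaces.linear_iff by blast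
lemma P_sc: "P (s c x) = s c (P x)" using linP unfolding Vector_Spaces.linear_iff by blast
lemma P_0[simp]: "P 0 = 0" using P_add[of 0 0] by simp

lemma Pn_add: "(P^^n) (x + y) = (P^^n) x + (P^^n) y"
  by (induct n) (auto simp: P_add)
lemma Pn_sc: "(P^^n) (s c x) = s c ((P^^n) x)"
  by (induct n) (auto simp: P_sc)
lemma Pn_0[simp]: "(P^^n) 0 = 0"
  using Pn_add[of n 0 0] by simp
lemma Pn_neg: "(P^^n) (- x) = - (P^^n) x"
  using Pn_add[of n x "-x"] by (simp add: add_eq_0_iff)
lemma Pn_diff: "(P^^n) (x - y) = (P^^n) x - (P^^n) y"
  using Pn_add[of n x "-y"] Pn_neg by simp
lemma Pn_sum: "(P^^n) (sum f A) = (\<Sum>i\<in>A. (P^^n) (f i))"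
  by (induct A rule: infinite_finite_induct) (auto simp: Pn_add)
lemma Pn_comp: "(P^^m) ((P^^n) x) = (P^^(m+n)) x"
  by (simp add: funpow_add)
lemma Pn_big: "N \<le> m \<Longrightarrow> (P^^m) x = 0"
proof -
  assume "N \<le> m"
  then have "(P^^m) x = (P^^(m-N)) ((P^^N) x)" by (simp add: Pn_comp)
  then show ?thesis using nil by simp
qed
lemma Pn_zero_mono: "(P^^m) x = 0 \<Longrightarrow> m \<le> m' \<Longrightarrow> (P^^m') x = 0"
proof -
  assume "(P^^m) x = 0" "m \<le> m'"
  have "(P^^m') x = (P^^(m'-m)) ((P^^m) x)" using \<open>m \<le> m'\<close> by (simp add: Pn_comp)
  then show ?thesis using \<open>(P^^m) x = 0\<close> by simp
qed

lemma SA1: "B (P u) v = B u (P v)" using sa unfolding self_adjoint_wrt_def by blast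
lemma SA: "B ((P^^n) u) v = B u ((P^^n) v)"
proof (induct n arbitrary: v)
  case 0 then show ?case by simp
next
  case (Suc n)
  have "B ((P^^Suc n) u) v = B (P ((P^^n) u)) v" by simp
  also have "\<dots> = B ((P^^n) u) (P v)" by (rule SA1)
  also have "\<dots> = B u ((P^^n) (P v))" by (rule Suc)
  also have "\<dots> = B u ((P^^Suc n) v)" by (simp add: funpow_swap1)
  finally show ?case .
qed

lemma B_self: "B ((P^^i) c) ((P^^j) c) = 0"
proof -
  have "B ((P^^i) c) ((P^^j) c) = B c ((P^^(i+j)) c)" by (simp add: SA Pn_comp add.commute)
  have "B c ((P^^(i+j)) c) = B ((P^^(i+j)) c) c" by (simp add: SA)
  moreover have "B ((P^^(i+j)) c) c = - B c ((P^^(i+j)) c)" by (rule B_skew)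
  ultimately have e: "B c ((P^^(i+j)) c) = - B c ((P^^(i+j)) c)" by (rule trans)
  have "B c ((P^^(i+j)) c) + B c ((P^^(i+j)) c) = 0" using e by (metis eq_neg_iff_add_eq_0)
  then have "2 * B c ((P^^(i+j)) c) = 0" by (simp only: mult_2)
  then have "B c ((P^^(i+j)) c) = 0" by simp
  with \<open>B ((P^^i) c) ((P^^j) c) = B c ((P^^(i+j)) c)\<close> show ?thesis by simp
qed

lemma nd_P: "(\<And>x. B a ((P^^m) x) = 0) \<Longrightarrow> (P^^m) a = 0"
  by (rule B_nd) (simp add: SA)

end
context symp begin

definition Xop :: "nat \<Rightarrow> 'v \<Rightarrow> 'v \<Rightarrow> 'v \<Rightarrow> 'v" where
  "Xop M c d x = (\<Sum>i\<le>M. s (B ((P^^i) c) x) ((P^^(M-i)) d))"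

lemma Xop_add: "Xop M c d (x + y) = Xop M c d x + Xop M c d y"
  unfolding Xop_def by (simp add: B_add2 scale_left_distrib sum.distrib)
lemma Xop_sc: "Xop M c d (s r x) = s r (Xop M c d x)"
  unfolding Xop_def by (simp add: B_sc2 scale_sum_right)
lemma Xop_0[simp]: "Xop M c d 0 = 0"
  unfolding Xop_def by simp
lemma Xop_diff: "Xop M c d (x - y) = Xop M c d x - Xop M c d y"
proof -
  have "Xop M c d (x - y) + Xop M c d y = Xop M c d x"
    using Xop_add[of M c d "x-y" y] by simp
  then show ?thesis by (simp add: eq_diff_eq)
qed
lemma Xop_linear: "Vector_Spaces.linear s s (Xop M c d)"
  unfolding Vector_Spaces.linear_iff using vector_space_axioms Xop_add Xop_sc by blast

lemma Xop_add1: "Xop M (a + b) d x = Xop M a d x + Xop M b d x"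
  unfolding Xop_def by (simp add: Pn_add B_add1 scale_left_distrib sum.distrib)
lemma Xop_add2: "Xop M c (a + b) x = Xop M c a x + Xop M c b x"
  unfolding Xop_def by (simp add: Pn_add scale_right_distrib sum.distrib)

lemma Xop_polar: "Xop M (a+b) (a+b) x = Xop M a a x + (Xop M a b x + Xop M b a x) + Xop M b b x"
  by (simp add: Xop_add1 Xop_add2 algebra_simps)

lemma Xop_Px: "Xop M c d (P x) = Xop M (P c) d x"
  unfolding Xop_def
proof (rule sum.cong[OF refl])
  fix i
  have "B ((P^^i) c) (P x) = B ((P^^i) (P c)) x"
    by (metis SA1 funpow_swap1)
  then show "s (B ((P ^^ i) c) (P x)) ((P ^^ (M - i)) d) = s (B ((P ^^ i) (P c)) x) ((P ^^ (M - i)) d)"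
    by simp
qed

lemma P_Xop: "P (Xop M c d x) = Xop M c (P d) x"
proof -
  have "P (Xop M c d x) = (P^^1) (Xop M c d x)" by simp
  also have "\<dots> = Xop M c (P d) x"
    unfolding Xop_def Pn_sum Pn_sc by (simp add: funpow_swap1)
  finally show ?thesis .
qed

lemma Xop_shift:
  assumes c: "(P^^Suc M) c = 0" and d: "(P^^Suc M) d = 0"
  shows "Xop M (P c) d x = Xop M c (P d) x"
proof -
  define F where "F i = s (B ((P^^i) c) x) ((P^^(Suc M - i)) d)" for i
  have "sum F {..Suc M} = F 0 + (\<Sum>i\<le>M. F (Suc i))" by (rule sum.atMost_Suc_shift)
  also have "F 0 = 0" using d by (simp add: F_def)
  also have "(\<Sum>i\<le>M. F (Suc i)) = Xop M (P c) d x"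
    unfolding Xop_def F_def by (simp add: funpow_swap1)
  finally have 1: "sum F {..Suc M} = Xop M (P c) d x" by simp
  have "sum F {..Suc M} = sum F {..M} + F (Suc M)" by simp
  also have "F (Suc M) = 0" using c by (simp add: F_def)
  also have "sum F {..M} = Xop M c (P d) x"
    unfolding Xop_def F_def
  proof (rule sum.cong[OF refl])
    fix i assume "i \<in> {..M}"
    then have "Suc M - i = Suc (M - i)" by auto
    then show "s (B ((P ^^ i) c) x) ((P ^^ (Suc M - i)) d) = s (B ((P ^^ i) c) x) ((P ^^ (M - i)) (P d))"
      by (simp add: funpow_swap1)
  qed
  finally show ?thesis using 1 by simp
qed

lemma K_P: "(P^^m) c = 0 \<Longrightarrow> (P^^m) (P c) = 0"
  by (metis P_0 funpow_swap1)
lemma K_Pn: "(P^^m) c = 0 \<Longrightarrow> (P^^m) ((P^^k) c) = 0"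
  by (simp add: Pn_comp add.commute[of m k] Pn_comp[symmetric])

lemma Xop_shift_pow:
  assumes c: "(P^^Suc M) c = 0" and d: "(P^^Suc M) d = 0"
  shows "Xop M ((P^^k) c) d x = Xop M c ((P^^k) d) x"
  using c d
proof (induct k arbitrary: d)
  case 0 then show ?case by simp
next
  case (Suc k)
  have "Xop M ((P^^Suc k) c) d x = Xop M (P ((P^^k) c)) d x" by simp
  also have "\<dots> = Xop M ((P^^k) c) (P d) x"
    by (rule Xop_shift[OF K_Pn[OF Suc.prems(1)] Suc.prems(2)])
  also have "\<dots> = Xop M c ((P^^k) (P d)) x"
    by (rule Suc.hyps[OF Suc.prems(1) K_P[OF Suc.prems(2)]])
  also have "\<dots> = Xop M c ((P^^Suc k) d) x" by (simp add: funpow_swap1)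
  finally show ?case .
qed

lemma B_Xop1: "B (Xop M c d u) v = (\<Sum>i\<le>M. B ((P^^i) c) u * B ((P^^(M-i)) d) v)"
  unfolding Xop_def by (simp add: B_sum1 B_sc1)
lemma B_Xop2: "B v (Xop M c d u) = (\<Sum>i\<le>M. B ((P^^i) c) u * B v ((P^^(M-i)) d))"
  unfolding Xop_def by (simp add: B_sum2 B_sc2)

lemma Xop_skew: "B (Xop M c c u) v + B u (Xop M c c v) = 0"
proof -
  have "B u (Xop M c c v) = (\<Sum>i\<le>M. B ((P^^i) c) v * B u ((P^^(M-i)) c))" by (rule B_Xop2)
  also have "\<dots> = (\<Sum>i\<le>M. B ((P^^(M-i)) c) v * B u ((P^^(M-(M-i))) c))"
    by (rule sum_rev_atMost)
  also have "\<dots> = (\<Sum>i\<le>M. - (B ((P^^i) c) u * B ((P^^(M-i)) c) v))"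
    by (rule sum.cong[OF refl]) (auto simp: B_skew[of u])
  also have "\<dots> = - B (Xop M c c u) v" by (simp add: B_Xop1 sum_negf)
  finally show ?thesis by simp
qed

lemma Xop_iso: "B (Xop M c c u) (Xop M c c v) = 0"
  unfolding B_Xop1 B_Xop2 by (simp add: B_self)

lemma Xop_sq: "Xop M c c (Xop M c c x) = 0"
  unfolding Xop_def[of M c c "Xop M c c x"] by (simp add: B_Xop2 B_self)

lemma Aut_elem:
  assumes c: "(P^^Suc M) c = 0"
  shows "(\<lambda>x. x + Xop M c c x) \<in> Aut_VBP s B P"
proof -
  let ?g = "\<lambda>x. x + Xop M c c x"
  let ?h = "\<lambda>x. x - Xop M c c x"
  have lin: "Vector_Spaces.linear s s ?g"
    unfolding Vector_Spaces.linear_iff using vector_space_axioms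
    by (simp add: Xop_add Xop_sc scale_right_distrib algebra_simps)
  have gh: "?g (?h x) = x" for x by (simp add: Xop_diff Xop_sq)
  have hg: "?h (?g x) = x" for x by (simp add: Xop_add Xop_sq)
  have bij: "bij ?g"
    by (rule bij_betw_byWitness[where f'="?h"]) (use gh hg in auto)
  have pres: "B (?g u) (?g v) = B u v" for u v
  proof -
    have "B (?g u) (?g v) = B u v + (B (Xop M c c u) v + B u (Xop M c c v)) + B (Xop M c c u) (Xop M c c v)"
      by (simp add: B_add1 B_add2 algebra_simps)
    then show ?thesis by (simp add: Xop_skew Xop_iso)
  qed
  have comm: "?g \<circ> P = P \<circ> ?g"
  proof
    fix x
    have "Xop M c c (P x) = P (Xop M c c x)"
      using Xop_shift[OF c c] by (simp add: Xop_Px P_Xop)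
    then show "(?g \<circ> P) x = (P \<circ> ?g) x" by (simp add: P_add)
  qed
  show ?thesis unfolding Aut_VBP_def using lin bij pres comm by blast
qed

end
context symp begin

lemma ann_subspace: "subspace {x. B c x = 0}"
  unfolding subspace_def by (simp add: B_add2 B_sc2)

lemma ann_span: "(\<And>x. x \<in> S \<Longrightarrow> B c x = 0) \<Longrightarrow> y \<in> span S \<Longrightarrow> B c y = 0"
  using span_minimal[of S "{x. B c x = 0}"] ann_subspace by blast

lemma rep:
  assumes S0: "finite S0" "span S0 = UNIV"
    and U: "subspace U" and z: "z \<notin> U"
  shows "\<exists>a. (\<forall>u\<in>U. B a u = 0) \<and> B a z = 1"
proof -
  obtain B0 where B0: "B0 \<subseteq> S0" "independent B0" "S0 \<subseteq> span B0"
    using maximal_independent_subset by blast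
  have spB0: "span B0 = UNIV"
    using S0(2) span_mono[OF B0(3)] by (auto simp: span_span)
  interpret fd: finite_dimensional_vector_space s B0
    by unfold_locales (use B0 S0 finite_subset spB0 in auto)
  obtain Bu where Bu: "Bu \<subseteq> U" "independent Bu" "U \<subseteq> span Bu"
    using maximal_independent_subset by blast
  have "span Bu \<subseteq> U" using span_minimal[OF Bu(1) U] .
  then have zBu: "z \<notin> span Bu" using z by blast
  have ind: "independent (insert z Bu)" using independent_insertI[OF zBu Bu(2)] .
  define Bas where "Bas = extend_basis (insert z Bu)"
  have Bas: "insert z Bu \<subseteq> Bas" "independent Bas" "span Bas = UNIV"
    unfolding Bas_def using extend_basis_superset[OF ind] independent_extend_basis[OF ind]
      span_extend_basis[OF ind] by auto
  have finBas: "finite Bas" using fd.finiteI_independent[OF Bas(2)] .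
  define T where "T a = (\<Sum>e\<in>Bas. s (B a e) e)" for a
  have coef: "\<And>f g. (\<Sum>e\<in>Bas. s (f e) e) = (\<Sum>e\<in>Bas. s (g e) e) \<Longrightarrow> \<forall>e\<in>Bas. f e = g e"
  proof -
    fix f g assume eq: "(\<Sum>e\<in>Bas. s (f e) e) = (\<Sum>e\<in>Bas. s (g e) e)"
    have "(\<Sum>e\<in>Bas. s (f e - g e) e) = 0"
      using eq by (simp add: scale_left_diff_distrib sum_subtractf)
    then have z0: "(\<Sum>e\<in>Bas. s (f e - g e) e) = 0" .
    show "\<forall>e\<in>Bas. f e = g e"
    proof (rule ccontr)
      assume "\<not> (\<forall>e\<in>Bas. f e = g e)"
      then obtain e where e: "e \<in> Bas" "f e - g e \<noteq> 0" by auto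
      have "dependent Bas" unfolding dependent_finite[OF finBas]
        by (rule exI[of _ "\<lambda>e. f e - g e"]) (use e z0 in blast)
      then show False using Bas(2) by simp
    qed
  qed
  have linT: "Vector_Spaces.linear s s T"
    unfolding Vector_Spaces.linear_iff T_def using vector_space_axioms
    by (simp add: B_add1 B_sc1 scale_left_distrib sum.distrib scale_sum_right)
  have injT: "inj T"
  proof (rule injI)
    fix a a' assume "T a = T a'"
    then have "\<forall>e\<in>Bas. B a e = B a' e" unfolding T_def by (rule coef)
    then have "\<And>e. e \<in> Bas \<Longrightarrow> B (a - a') e = 0" by (simp add: B_diff1)
    then have "\<And>y. B (a - a') y = 0" using ann_span Bas(3) by blast
    then have "a - a' = 0" by (rule B_nd)
    then show "a = a'" by simp
  qed
  have "surj T" by (rule fd.linear_inj_imp_surj[OF linT injT])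
  then obtain a where Ta: "T a = z" by (metis surjD)
  have zB: "z \<in> Bas" using Bas(1) by blast
  have "(\<Sum>e\<in>Bas. s (if e = z then 1 else 0) e) = (\<Sum>e\<in>Bas. if e = z then z else 0)"
    by (rule sum.cong[OF refl]) simp
  also have "\<dots> = z" using zB finBas by (simp add: sum.delta)
  finally have "z = (\<Sum>e\<in>Bas. s (if e = z then 1 else 0) e)" by (rule sym)
  then have "\<forall>e\<in>Bas. B a e = (if e = z then 1 else 0)"
    using Ta unfolding T_def by (intro coef) simp
  then have E: "\<And>e. e \<in> Bas \<Longrightarrow> B a e = (if e = z then 1 else 0)" by blast
  have az: "B a z = 1" using E[OF zB] by simp
  have aBu: "B a u = 0" if "u \<in> Bu" for u
  proof -
    have "u \<noteq> z" using that zBu span_base by blast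
    moreover have "u \<in> Bas" using that Bas(1) by blast
    ultimately show ?thesis using E by simp
  qed
  have "\<forall>u\<in>U. B a u = 0" using ann_span[of Bu a, OF aBu] Bu(3) by blast
  with az show ?thesis by blast
qed

end

lemma crossing:
  assumes "Q a" "\<not> Q b" "a \<le> (b::nat)"
  shows "\<exists>h. a \<le> h \<and> h < b \<and> Q h \<and> \<not> Q (Suc h)"
  using assms
proof (induct b)
  case 0 then show ?case by auto
next
  case (Suc b)
  show ?case
  proof (cases "Q b")
    case True then show ?thesis using Suc.prems by (intro exI[of _ b]) (auto simp: le_Suc_eq)
  next
    case False
    have "a \<le> b" using Suc.prems False by (auto simp: le_Suc_eq)
    with Suc.hyps[OF Suc.prems(1) False] show ?thesis by auto
  qed
qed

context symp begin

lemma sum_pick: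
  assumes "finite A" "n \<in> A" "subspace W" "sum F A \<in> W" "\<And>i. i \<in> A \<Longrightarrow> i \<noteq> n \<Longrightarrow> F i \<in> W"
  shows "F n \<in> W"
proof -
  have "sum F A = F n + sum F (A - {n})" using assms(1,2) by (rule sum.remove)
  then have "F n = sum F A - sum F (A - {n})" by simp
  moreover have "sum F (A - {n}) \<in> W" using assms(3,5) by (intro subspace_sum) auto
  ultimately show ?thesis using assms(3,4) subspace_diff by metis
qed

lemma range_subspace: "subspace (range (P^^k))"
  unfolding subspace_def
proof (intro conjI ballI allI)
  show "0 \<in> range (P^^k)" by (rule image_eqI[where x=0]) simp_all
next
  fix x y assume "x \<in> range (P^^k)" "y \<in> range (P^^k)"
  then obtain a b where "x = (P^^k) a" "y = (P^^k) b" by blast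
  then have "x + y = (P^^k) (a + b)" by (simp add: Pn_add)
  then show "x + y \<in> range (P^^k)" by simp
next
  fix c x assume "x \<in> range (P^^k)"
  then obtain a where "x = (P^^k) a" by blast
  then have "s c x = (P^^k) (s c a)" by (simp add: Pn_sc)
  then show "s c x \<in> range (P^^k)" by simp
qed

context
  fixes W assumes W: "subspace W" and inv: "\<forall>g\<in>Aut_VBP s B P. g ` W \<subseteq> W"
begin

lemma W_X: assumes "x \<in> W" "(P^^Suc M) c = 0" shows "Xop M c c x \<in> W"
proof -
  have h: "(\<lambda>x. x + Xop M c c x) ` W \<subseteq> W" by (rule bspec[OF inv Aut_elem[OF assms(2)]])
  have "(\<lambda>x. x + Xop M c c x) x \<in> W" by (rule subsetD[OF h imageI[OF assms(1)]])
  then have "x + Xop M c c x \<in> W" by simp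
  then have "(x + Xop M c c x) - x \<in> W" by (rule subspace_diff[OF W _ assms(1)])
  then show ?thesis by simp
qed

lemma W_Y: assumes "x \<in> W" "(P^^Suc M) a = 0" "(P^^Suc M) b = 0"
  shows "Xop M a b x + Xop M b a x \<in> W"
proof -
  have ab: "(P^^Suc M) (a + b) = 0" by (simp only: Pn_add assms(2,3) add_0)
  have "Xop M (a+b) (a+b) x - Xop M a a x - Xop M b b x \<in> W"
    using W_X[OF assms(1) ab] W_X[OF assms(1) assms(2)] W_X[OF assms(1) assms(3)] subspace_diff[OF W] by blast
  then show ?thesis by (simp add: Xop_polar)
qed

lemma piece:
  assumes w: "w \<in> W" "(P^^Suc n) w = 0" and a: "(P^^Suc M) a = 0" "B a ((P^^n) w) = 1"
    and nM: "n \<le> M"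
  shows "(P^^Suc M) b = 0 \<Longrightarrow> (P^^(M-n)) b \<in> W"
proof -
  define al where "al i = B ((P^^i) a) w" for i
  have al_n: "al n = 1" using a(2) by (simp add: al_def SA)
  have al_big: "al i = 0" if "n < i" for i
  proof -
    have "(P^^i) w = 0" using Pn_zero_mono[OF w(2)] that by simp
    then show ?thesis by (simp add: al_def SA)
  qed
  have Ka: "(P^^Suc M) ((P^^k) a) = 0" for k using K_Pn[OF a(1)] .
  have zk: "Xop M a ((P^^k) a) w \<in> W" for k
  proof -
    have "Xop M a ((P^^k) a) w + Xop M ((P^^k) a) a w \<in> W" by (rule W_Y[OF w(1) a(1) Ka])
    then have "Xop M a ((P^^k) a) w + Xop M a ((P^^k) a) w \<in> W"
      using Xop_shift_pow[OF a(1) a(1)] by simp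
    then have "s (1/2) (Xop M a ((P^^k) a) w + Xop M a ((P^^k) a) w) \<in> W"
      using subspace_scale[OF W] by blast
    moreover have "s (1/2) (Xop M a ((P^^k) a) w + Xop M a ((P^^k) a) w) = Xop M a ((P^^k) a) w"
    proof -
      have "s (1/2) (Xop M a ((P^^k) a) w + Xop M a ((P^^k) a) w)
          = s (1/2) (Xop M a ((P^^k) a) w) + s (1/2) (Xop M a ((P^^k) a) w)"
        by (rule scale_right_distrib)
      also have "\<dots> = s (1/2 + 1/2) (Xop M a ((P^^k) a) w)" by (rule scale_left_distrib[symmetric])
      also have "\<dots> = Xop M a ((P^^k) a) w" by simp
      finally show ?thesis .
    qed
    ultimately show ?thesis by simp
  qed
  have S1: "\<And>j. M - n \<le> j \<Longrightarrow> Suc M \<le> j + m \<Longrightarrow> (P^^j) a \<in> W" for m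
  proof (induct m)
    case 0
    then have "(P^^j) a = 0" using Pn_zero_mono[OF a(1)] by simp
    then show ?case using subspace_0[OF W] by simp
  next
    case (Suc m)
    define k where "k = j - (M - n)"
    define F where "F i = s (al i) ((P^^(M-i)) ((P^^k) a))" for i
    have sX: "sum F {..M} \<in> W" using zk[of k] unfolding F_def Xop_def al_def .
    have oX: "F i \<in> W" if "i \<in> {..M}" "i \<noteq> n" for i
    proof (cases "n < i")
      case True then show ?thesis using al_big subspace_0[OF W] by (simp add: F_def)
    next
      case False
      then have "i < n" using that by auto
      have eqk: "(P^^(M-i)) ((P^^k) a) = (P^^(M-i+k)) a" by (simp add: Pn_comp)
      have j1: "M - n \<le> j" "Suc M \<le> j + Suc m" using Suc.prems by auto
      have h1: "M - n \<le> M - i + k" using \<open>i<n\<close> nM j1 unfolding k_def by arith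
      have h2: "Suc M \<le> (M - i + k) + m" using \<open>i<n\<close> nM j1 unfolding k_def by arith
      have "(P^^(M-i+k)) a \<in> W"
        by (rule Suc.hyps[OF h1 h2])
      then show ?thesis using subspace_scale[OF W] eqk by (simp add: F_def)
    qed
    have nin: "n \<in> {..M}" using nM by simp
    have "F n \<in> W" by (rule sum_pick[OF finite_atMost nin W sX oX])
    moreover have "F n = (P^^j) a" using Suc.prems nM by (simp add: F_def al_n Pn_comp k_def)
    ultimately show ?case by simp
  qed
  have S1': "(P^^j) a \<in> W" if "M - n \<le> j" for j
    using S1[of j "Suc M"] that by simp
  have S3: "Xop M a b w \<in> W" if b: "(P^^Suc M) b = 0" for b
  proof -
    have S2: "Xop M b a w \<in> W"
      unfolding Xop_def
    proof (rule subspace_sum[OF W])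
      fix i assume "i \<in> {..M}"
      show "s (B ((P ^^ i) b) w) ((P ^^ (M - i)) a) \<in> W"
      proof (cases "n < i")
        case True
        then have "(P^^i) w = 0" using Pn_zero_mono[OF w(2)] by simp
        then show ?thesis using subspace_0[OF W] by (simp add: SA)
      next
        case False
        then show ?thesis using S1'[of "M - i"] subspace_scale[OF W] by simp
      qed
    qed
    have "(Xop M a b w + Xop M b a w) - Xop M b a w \<in> W"
      using W_Y[OF w(1) a(1) b] S2 subspace_diff[OF W] by blast
    then show ?thesis by simp
  qed
  have S4: "\<And>b. (P^^m) b = 0 \<Longrightarrow> (P^^Suc M) b = 0 \<Longrightarrow> (P^^(M-n)) b \<in> W" for m
  proof (induct m)
    case 0 then show ?case using subspace_0[OF W] by simp
  next
    case (Suc m)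
    define G where "G i = s (al i) ((P^^(M-i)) b)" for i
    have sX: "sum G {..M} \<in> W" using S3[OF Suc.prems(2)] unfolding G_def Xop_def al_def .
    have oX: "G i \<in> W" if "i \<in> {..M}" "i \<noteq> n" for i
    proof (cases "n < i")
      case True then show ?thesis using al_big subspace_0[OF W] by (simp add: G_def)
    next
      case False
      then have "i < n" using that by auto
      have eq: "(P^^(M-i)) b = (P^^(M-n)) ((P^^(n-i)) b)"
        using \<open>i < n\<close> nM by (simp add: Pn_comp)
      have "(P^^m) ((P^^(n-i)) b) = 0"
        using Pn_zero_mono[OF Suc.prems(1), of "m + (n - i)"] \<open>i < n\<close> by (simp add: Pn_comp)
      moreover have "(P^^Suc M) ((P^^(n-i)) b) = 0" using K_Pn[OF Suc.prems(2)] .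
      ultimately have "(P^^(M-n)) ((P^^(n-i)) b) \<in> W" by (rule Suc.hyps)
      then show ?thesis using subspace_scale[OF W] eq by (simp add: G_def)
    qed
    have nin: "n \<in> {..M}" using nM by simp
    have "G n \<in> W" by (rule sum_pick[OF finite_atMost nin W sX oX])
    then show ?case by (simp add: G_def al_n)
  qed
  assume "(P^^Suc M) b = 0"
  then show "(P^^(M-n)) b \<in> W" using S4[of "Suc M" b] by simp
qed

end
end

context symp begin

lemma decomp:
  assumes S0: "finite S0" "span S0 = UNIV"
    and W: "subspace W" and inv: "\<forall>g\<in>Aut_VBP s B P. g ` W \<subseteq> W"
    and T0: "0 \<in> T" and Tadd: "\<And>x y. x \<in> T \<Longrightarrow> y \<in> T \<Longrightarrow> x + y \<in> T"
    and Tpiece: "\<And>k l. k \<le> N \<Longrightarrow> l \<le> N \<Longrightarrow> ker_pow P k \<inter> im_pow P l \<subseteq> W \<Longrightarrow>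
                   ker_pow P k \<inter> im_pow P l \<subseteq> T"
  shows "w \<in> W \<Longrightarrow> (P^^m) w = 0 \<Longrightarrow> w \<in> T"
proof (induct m arbitrary: w)
  case 0 then show ?case using T0 by simp
next
  case (Suc n)
  show ?case
  proof (cases "(P^^n) w = 0")
    case True then show ?thesis using Suc by blast
  next
    case False
    define z where "z = (P^^n) w"
    have nN: "n < N" using False Pn_big by (metis not_le)
    have zN: "z \<notin> range (P^^N)" using False nil unfolding z_def by auto
    have zn: "z \<in> range (P^^n)" unfolding z_def by simp
    obtain M where M: "n \<le> M" "M < N" "z \<in> range (P^^M)" "z \<notin> range (P^^Suc M)"
      using crossing[of "\<lambda>h. z \<in> range (P^^h)", OF zn zN] nN by auto
    obtain a where a: "\<forall>u\<in>range (P^^Suc M). B a u = 0" "B a z = 1"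
      using rep[OF S0 range_subspace M(4)] by blast
    have Ka: "(P^^Suc M) a = 0" by (rule nd_P) (use a(1) in auto)
    have pc: "\<And>b. (P^^Suc M) b = 0 \<Longrightarrow> (P^^(M-n)) b \<in> W"
      using piece[OF W inv Suc.prems(1) Suc.prems(2) Ka a(2)[unfolded z_def] M(1)] .
    have sub: "ker_pow P (Suc n) \<inter> im_pow P (M-n) \<subseteq> W"
    proof
      fix x assume "x \<in> ker_pow P (Suc n) \<inter> im_pow P (M-n)"
      then obtain y where x: "x = (P^^(M-n)) y" "(P^^Suc n) x = 0"
        unfolding ker_pow_def im_pow_def by auto
      have "(P^^Suc M) y = (P^^Suc n) x" using x M(1) by (simp add: Pn_comp)
      then show "x \<in> W" using pc x by simp
    qed
    obtain y0 where y0: "z = (P^^M) y0" using M(3) by auto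
    define p where "p = (P^^(M-n)) y0"
    have pz: "(P^^n) p = z" using y0 M(1) by (simp add: p_def Pn_comp)
    have pker: "(P^^Suc n) p = 0"
    proof -
      have "(P^^Suc n) p = P z" using pz by (simp add: funpow_swap1[symmetric])
      also have "\<dots> = (P^^Suc n) w" by (simp add: z_def)
      finally show ?thesis using Suc.prems(2) by simp
    qed
    have pin: "p \<in> ker_pow P (Suc n) \<inter> im_pow P (M-n)"
      using pker unfolding ker_pow_def im_pow_def p_def by auto
    then have pW: "p \<in> W" using sub by blast
    have n1: "Suc n \<le> N" using nN by simp
    have n2: "M - n \<le> N" using M(2) by simp
    have pT: "p \<in> T" using Tpiece[OF n1 n2 sub] pin by blast
    have "w - p \<in> W" using subspace_diff[OF W Suc.prems(1) pW] .
    moreover have "(P^^n) (w - p) = 0" using pz by (simp add: Pn_diff z_def)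
    ultimately have "w - p \<in> T" using Suc.hyps by blast
    then have "(w - p) + p \<in> T" using Tadd pT by blast
    then show ?thesis by simp
  qed
qed

lemma claim:
  assumes S0: "finite S0" "span S0 = UNIV"
  shows "theorem7_claim s B P"
  unfolding theorem7_claim_def
proof (intro allI impI, elim conjE)
  fix W assume W: "subspace W" and inv: "\<forall>g\<in>Aut_VBP s B P. g ` W \<subseteq> W"
  define Q where "Q = {(k,l). k \<le> N \<and> l \<le> N \<and> ker_pow P k \<inter> im_pow P l \<subseteq> W}"
  have "Q \<subseteq> {..N} \<times> {..N}" unfolding Q_def by auto
  then have "finite Q" by (rule finite_subset) auto
  then obtain xs where xs: "set xs = Q" using finite_list by blast
  define U where "U i = ker_pow P (fst (xs!i)) \<inter> im_pow P (snd (xs!i))" for i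
  define T where "T = subspace_sum (length xs) U"
  have UW: "U i \<subseteq> W" if "i < length xs" for i
  proof -
    have "xs!i \<in> Q" using that xs nth_mem by blast
    then show ?thesis unfolding U_def Q_def by auto
  qed
  have U0: "0 \<in> U i" for i unfolding U_def ker_pow_def im_pow_def by (auto intro!: image_eqI[where x=0])
  have Uadd: "x + y \<in> U i" if "x \<in> U i" "y \<in> U i" for x y i
    using that unfolding U_def ker_pow_def im_pow_def by (auto simp: Pn_add) (metis Pn_add rangeI)
  have T0: "0 \<in> T" unfolding T_def subspace_sum_def
    by (rule CollectI, rule exI[of _ "\<lambda>_. 0"]) (simp add: U0)
  have Tadd: "x + y \<in> T" if xT: "x \<in> T" and yT: "y \<in> T" for x y
  proof -
    obtain f where f: "x = (\<Sum>i<length xs. f i)" "\<forall>i<length xs. f i \<in> U i"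
      using xT unfolding T_def mem_ssum by blast
    obtain g where g: "y = (\<Sum>i<length xs. g i)" "\<forall>i<length xs. g i \<in> U i"
      using yT unfolding T_def mem_ssum by blast
    have "x + y = (\<Sum>i<length xs. f i + g i)" using f g by (simp add: sum.distrib)
    moreover have "\<forall>i<length xs. f i + g i \<in> U i" using f g Uadd by blast
    ultimately show ?thesis unfolding T_def subspace_sum_def by blast
  qed
  have Tpiece: "ker_pow P k \<inter> im_pow P l \<subseteq> T"
    if "k \<le> N" "l \<le> N" "ker_pow P k \<inter> im_pow P l \<subseteq> W" for k l
  proof
    fix p assume p: "p \<in> ker_pow P k \<inter> im_pow P l"
    have "(k,l) \<in> set xs" using xs that unfolding Q_def by auto
    then obtain j where j: "j < length xs" "xs!j = (k,l)" by (metis in_set_conv_nth)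
    define f where "f i = (if i = j then p else 0)" for i
    have "(\<Sum>i<length xs. f i) = p" using j(1) by (simp add: f_def)
    moreover have "\<forall>i<length xs. f i \<in> U i" using p j U0 by (auto simp: f_def U_def)
    ultimately show "p \<in> T" unfolding T_def subspace_sum_def by blast
  qed
  have "W \<subseteq> T"
  proof
    fix w assume "w \<in> W"
    moreover have "(P^^N) w = 0" using nil by simp
    ultimately show "w \<in> T" using decomp[OF S0 W inv T0 Tadd Tpiece] by blast
  qed
  moreover have "T \<subseteq> W"
  proof
    fix x assume "x \<in> T"
    then obtain f where f: "x = (\<Sum>i<length xs. f i)" "\<forall>i<length xs. f i \<in> U i"
      unfolding T_def mem_ssum by blast
    have "(\<Sum>i<length xs. f i) \<in> W" using f(2) UW by (intro subspace_sum[OF W]) auto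
    then show "x \<in> W" using f(1) by simp
  qed
  ultimately show "\<exists>s k l. W = subspace_sum s (\<lambda>i. ker_pow P (k i) \<inter> im_pow P (l i))"
    unfolding T_def U_def by (intro exI) (rule equalityI)
qed

end

lemma generic:
  fixes s :: "'k::field_char_0 \<Rightarrow> 'v::ab_group_add \<Rightarrow> 'v"
  assumes "fin_dim_vs s" "symplectic_form s B" "Vector_Spaces.linear s s P"
    "nilpotent_op P" "self_adjoint_wrt B P"
  shows "theorem7_claim s B P"
proof -
  obtain N where N: "(P ^^ N) = (\<lambda>_. 0)" using assms(4) unfolding nilpotent_op_def by blast
  have vs: "vector_space s" and "\<exists>S. finite S \<and> module.span s S = UNIV"
    using assms(1) unfolding fin_dim_vs_def by auto
  then obtain S0 where S0: "finite S0" "module.span s S0 = UNIV" by blast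
  interpret symp s B P N
    by (rule symp.intro[OF vs], rule symp_axioms.intro) (use assms N in auto)
  show ?thesis using claim S0 by blast
qed


theorem theorem7:
  shows "(\<forall>(smult_v :: real \<Rightarrow> 'v::ab_group_add \<Rightarrow> 'v) B P.
            fin_dim_vs smult_v \<and> symplectic_form smult_v B \<and> Vector_Spaces.linear smult_v smult_v P \<and>
            nilpotent_op P \<and> self_adjoint_wrt B P \<longrightarrow> theorem7_claim smult_v B P) \<and>
         (\<forall>(smult_v :: complex \<Rightarrow> 'w::ab_group_add \<Rightarrow> 'w) B P.
            fin_dim_vs smult_v \<and> symplectic_form smult_v B \<and> Vector_Spaces.linear smult_v smult_v P \<and>
            nilpotent_op P \<and> self_adjoint_wrt B P \<longrightarrow> theorem7_claim smult_v B P)"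
  apply (intro conjI allI impI)
   apply (elim conjE, rule generic; assumption)
  apply (elim conjE, rule generic; assumption)
  done

end
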